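(* For every integer $n\ge0$, \[ \sum_{m=1}^{\infty}\frac{(-1)^{m+1}(2m+2n+3)}{(m+1)(m+2n+2)}H_m=2\ln2\sum_{k=0}^{n}\frac{1}{2k+1}-\sum_{j=1}^{2n+1}\frac1j\sum_{k=1}^{j}\frac{(-1)^{k-1}}{k}. \]
   Context: $H_m=\sum_{j=1}^m 1/j$ is the $m$-th harmonic number. *)

theory Defs
  imports "HOL-Analysis.Analysis"
begin

end

theory Submission
  imports Defs "HOL-Real_Asymp.Real_Asymp"
begin

definition EE :: "nat \<Rightarrow> real" where
  "EE p = (\<Sum>k=1..p. (-1) ^ (k - 1) / real k)"

lemma EE_0 [simp]: "EE 0 = 0" by (simp add: EE_def)

lemma EE_Suc: "EE (Suc p) = EE p + (-1) ^ p / real (Suc p)"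
  by (simp add: EE_def)

lemma EE_lessThan: "EE p = (\<Sum>k<p. (-1) ^ k / real (Suc k))"
  by (induction p) (simp_all add: EE_Suc)

lemma EE_lim: "EE \<longlonglongrightarrow> ln 2"
  using alternating_harmonic_series_sums unfolding sums_def EE_lessThan[abs_def] .

lemma EE_shift: "EE (M + 1 + q) - EE (M + 1) = (\<Sum>t=1..q. (-1) ^ (M + t) / real (M + 1 + t))"
proof (induction q)
  case 0 then show ?case by simp
next
  case (Suc q)
  have "EE (M + 1 + Suc q) = EE (M + 1 + q) + (-1) ^ (M + Suc q) / real (M + 1 + Suc q)"
    using EE_Suc[of "M + 1 + q"] by (simp add: add.commute add.left_commute)
  then show ?case using Suc by simp
qed

lemma T_step:
  fixes M q :: nat
  shows "(\<Sum>t=1..q. ((-1) ^ (t - 1) * EE (Suc M) + EE (Suc M + t) - EE t) / real t)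
       - (\<Sum>t=1..q. ((-1) ^ (t - 1) * EE M + EE (M + t) - EE t) / real t)
       = - (EE (M + 1 + q) - EE (M + 1)) / real (M + 1)"
proof -
  have "(\<Sum>t=1..q. ((-1) ^ (t - 1) * EE (Suc M) + EE (Suc M + t) - EE t) / real t)
       - (\<Sum>t=1..q. ((-1) ^ (t - 1) * EE M + EE (M + t) - EE t) / real t)
       = (\<Sum>t=1..q. ((-1) ^ (t - 1) * EE (Suc M) + EE (Suc M + t) - EE t) / real t
            - ((-1) ^ (t - 1) * EE M + EE (M + t) - EE t) / real t)"
    by (simp add: sum_subtractf)
  also have "\<dots> = (\<Sum>t=1..q. - ((-1) ^ (M + t) / real (M + 1 + t)) / real (M + 1))"
  proof (rule sum.cong)
    fix t assume "t \<in> {1..q}"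
    then obtain u where t: "t = Suc u" by (cases t) auto
    have e1: "EE (Suc M) = EE M + (-1) ^ M / real (Suc M)" by (rule EE_Suc)
    have e2: "EE (Suc M + t) = EE (M + t) + (-1) ^ (M + t) / real (Suc (M + t))"
      using EE_Suc[of "M + t"] by simp
    show "((-1) ^ (t - 1) * EE (Suc M) + EE (Suc M + t) - EE t) / real t
            - ((-1) ^ (t - 1) * EE M + EE (M + t) - EE t) / real t
          = - ((-1) ^ (M + t) / real (M + 1 + t)) / real (M + 1)"
    proof -
      have p1: "(-1::real) ^ (t - 1) = - ((-1) ^ t)" using t by simp
      have tp: "real t > 0" using t by simp
      have alg: "\<And>x y z s r m t::real. t > 0 \<Longrightarrow> m \<ge> 0 \<Longrightarrow>
          ((-r)*(x + s/(m+1)) + (y + s*r/(m+t+1)) - z)/t - ((-r)*x + y - z)/t = -(s*r/(m+1+t))/(m+1)"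
      proof -
        fix x y z s r m t :: real assume "t > 0" "m \<ge> 0"
        moreover have "m*m \<ge> 0" "m * t \<ge> 0" using \<open>t>0\<close> \<open>m\<ge>0\<close> by auto
        ultimately have a: "m + 1 \<noteq> 0" "m + t + 1 \<noteq> 0" "m + 1 + t \<noteq> 0" "t \<noteq> 0"
          "(m+1)*(m+t+1) \<noteq> 0" "1 + (t + (m * m + (m * t + m * 2))) \<noteq> 0"
          by (auto, linarith)
        show "((-r)*(x + s/(m+1)) + (y + s*r/(m+t+1)) - z)/t - ((-r)*x + y - z)/t = -(s*r/(m+1+t))/(m+1)"
        proof -
          have s1: "((-r)*(x + s/(m+1)) + (y + s*r/(m+t+1)) - z) - ((-r)*x + y - z)
              = s*r*(1/(m+t+1) - 1/(m+1))" by (simp add: algebra_simps)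
          have s2: "1/(m+t+1) - 1/(m+1) = -t/((m+1)*(m+t+1))"
            using a by (simp add: field_simps)
          have "((-r)*(x + s/(m+1)) + (y + s*r/(m+t+1)) - z)/t - ((-r)*x + y - z)/t
              = (s*r*(1/(m+t+1) - 1/(m+1)))/t" by (simp only: diff_divide_distrib[symmetric] s1)
          also have "\<dots> = -(s*r)/((m+1)*(m+t+1))" unfolding s2 using a
            by simp
          also have "\<dots> = -(s*r/(m+1+t))/(m+1)"
            by (simp add: divide_divide_eq_left mult.commute add_ac)
          finally show ?thesis .
        qed
      qed
      show ?thesis unfolding e1 e2 p1 power_add
        using alg[where t="real t" and m="real M" and x="EE M" and y="EE (M+t)" and z="EE t" and s="(-1)^M" and r="(-1)^t"] tp
        by (simp add: add_ac)
    qed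
  qed simp
  also have "\<dots> = - (\<Sum>t=1..q. (-1) ^ (M + t) / real (M + 1 + t)) / real (M + 1)"
    by (simp add: sum_divide_distrib sum_negf)
  also have "\<dots> = - (EE (M + 1 + q) - EE (M + 1)) / real (M + 1)"
    by (simp only: EE_shift)
  finally show ?thesis .
qed


lemma alg2:
  fixes A B h c x y s T :: real
  assumes "A > 0" "B > 0"
  shows "(h+c)*((x + s/B) - (y - s/A)) + (T - (x - y)*c) = h*(x-y) + T + s*(A+B)/(A*B)*(h+c)"
proof -
  have "s/B + s/A = s*(A+B)/(A*B)" using assms by (simp add: field_simps)
  then show ?thesis by (simp add: algebra_simps)
qed

lemma partial:
  fixes n M :: nat
  defines "q \<equiv> 2*n+1"
  shows "(\<Sum>i<M. let m = i + 1 in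
            (-1) ^ (m + 1) * real (2*m + 2*n + 3) / (real (m + 1) * real (m + 2*n + 2)) * harm m)
       = harm M * (EE (M + 1 + q) - EE (M + 1))
         + (\<Sum>t=1..q. ((-1) ^ (t - 1) * EE M + EE (M + t) - EE t) / real t)"
proof (induction M)
  case 0 then show ?case by (simp add: harm_def)
next
  case (Suc M)
  define s :: real where "s = (-1) ^ M"
  define A :: real where "A = real M + 2"
  define B :: real where "B = real M + 2 * real n + 3"
  have hA: "A > 0" "B > 0" unfolding A_def B_def by auto
  have T: "(\<Sum>t=1..q. ((-1) ^ (t - 1) * EE (Suc M) + EE (Suc M + t) - EE t) / real t)
     = (\<Sum>t=1..q. ((-1) ^ (t - 1) * EE M + EE (M + t) - EE t) / real t)
       - (EE (M + 1 + q) - EE (M + 1)) * (1 / real (M + 1))"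
    using T_step[of M q] by (simp add: field_simps)
  have h: "harm (Suc M) = harm M + 1 / real (M+1)" by (simp add: harm_Suc divide_inverse)
  have e1: "EE (Suc M + 1 + q) = EE (M + 1 + q) + s / B"
    using EE_Suc[of "M + 1 + q"] unfolding s_def B_def q_def
    by (simp add: power_add add_ac)
  have e2: "EE (Suc M + 1) = EE (M + 1) - s / A"
    using EE_Suc[of "M + 1"] unfolding s_def A_def by (simp add: add_ac)
  have a: "(let m = M + 1 in
            (-1) ^ (m + 1) * real (2*m + 2*n + 3) / (real (m + 1) * real (m + 2*n + 2)) * harm m)
         = s*(A+B)/(A*B)*(harm M + 1 / real (M+1))"
    unfolding s_def A_def B_def Let_def h[symmetric]
    by (simp add: add_ac mult_ac)
  show ?case
    unfolding sum.lessThan_Suc Suc.IH a T h e1 e2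
    using alg2[OF hA, where h="harm M" and c="1 / real (M+1)" and x="EE (M + 1 + q)" and y="EE (M + 1)" and s=s
      and T="(\<Sum>t=1..q. ((-1) ^ (t - 1) * EE M + EE (M + t) - EE t) / real t)"] by linarith
qed

lemma odd_sum:
  "(\<Sum>t=1..2*n+1. ((-1) ^ (t - 1) + 1) / real t) = 2 * (\<Sum>k=0..n. 1 / real (2*k + 1))"
proof (induction n)
  case 0 then show ?case by simp
next
  case (Suc n)
  have "2 * Suc n + 1 = Suc (Suc (2*n+1))" by simp
  then have "(\<Sum>t=1..2 * Suc n + 1. ((-1::real) ^ (t - 1) + 1) / real t)
      = (\<Sum>t=1..2*n+1. ((-1) ^ (t - 1) + 1) / real t) + 2 / real (2 * Suc n + 1)"
    by (simp add: power_add)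
  then show ?case using Suc by simp
qed

lemma harm_le_ln: "harm M \<le> ln (real M) + (1::real)"
proof (cases "M = 0")
  case True then show ?thesis by (simp add: harm_def)
next
  case False
  then have "harm M - ln (real M) \<le> harm 1 - ln (real 1)"
    using euler_mascheroni_sequence_decreasing[of 1 M] by simp
  then show ?thesis by (simp add: harm_def)
qed

lemma diff_bound: "\<bar>EE (M + 1 + q) - EE (M + 1)\<bar> \<le> real q / (real M + 2)"
proof -
  have "\<bar>EE (M + 1 + q) - EE (M + 1)\<bar> \<le> (\<Sum>t=1..q. \<bar>(-1) ^ (M + t) / real (M + 1 + t)\<bar>)"
    unfolding EE_shift by (rule sum_abs)
  also have "\<dots> \<le> (\<Sum>t=1..q. 1 / (real M + 2))"
    by (intro sum_mono) (auto simp: abs_mult power_abs divide_simps)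
  finally show ?thesis by simp
qed

theorem proposition7:
  fixes n :: nat
  shows "(\<lambda>i. let m = i + 1 in
            (-1) ^ (m + 1) * real (2*m + 2*n + 3) / (real (m + 1) * real (m + 2*n + 2)) * harm m)
         sums (2 * ln 2 * (\<Sum>k=0..n. 1 / real (2*k + 1))
               - (\<Sum>j=1..2*n+1. (1 / real j) * (\<Sum>k=1..j. (-1) ^ (k - 1) / real k)))"
proof -
  define q where "q = 2*n+1"
  have L1: "(\<lambda>M. harm M * (EE (M + 1 + q) - EE (M + 1))) \<longlonglongrightarrow> 0"
  proof (rule Lim_null_comparison)
    have "(\<lambda>M. (ln (real M) + 1) * real q / (real M + 2)) \<longlonglongrightarrow> 0"
      by real_asymp
    then show "(\<lambda>M. (ln (real M) + 1) * (real q / (real M + 2))) \<longlonglongrightarrow> 0" by simp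
    show "\<forall>\<^sub>F M in sequentially. norm (harm M * (EE (M + 1 + q) - EE (M + 1)))
           \<le> (ln (real M) + 1) * (real q / (real M + 2))"
    proof (intro always_eventually allI)
      fix M
      have "norm (harm M * (EE (M + 1 + q) - EE (M + 1))) = harm M * \<bar>EE (M + 1 + q) - EE (M + 1)\<bar>"
        by (simp add: abs_mult)
      also have "\<dots> \<le> (ln (real M) + 1) * (real q / (real M + 2))"
        by (intro mult_mono harm_le_ln diff_bound) (auto simp: harm_nonneg intro: order_trans[OF harm_nonneg harm_le_ln])
      finally show "norm (harm M * (EE (M + 1 + q) - EE (M + 1))) \<le> (ln (real M) + 1) * (real q / (real M + 2))" .
    qed
  qed
  have L2: "(\<lambda>M. \<Sum>t=1..q. ((-1) ^ (t - 1) * EE M + EE (M + t) - EE t) / real t)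
       \<longlonglongrightarrow> (\<Sum>t=1..q. ((-1) ^ (t - 1) * ln 2 + ln 2 - EE t) / real t)"
    by (intro tendsto_intros EE_lim LIMSEQ_ignore_initial_segment[OF EE_lim]) auto
  have "(\<lambda>M. harm M * (EE (M + 1 + q) - EE (M + 1))
         + (\<Sum>t=1..q. ((-1) ^ (t - 1) * EE M + EE (M + t) - EE t) / real t))
       \<longlonglongrightarrow> 0 + (\<Sum>t=1..q. ((-1) ^ (t - 1) * ln 2 + ln 2 - EE t) / real t)"
    by (intro tendsto_add L1 L2)
  moreover have "(\<Sum>t=1..q. ((-1) ^ (t - 1) * ln 2 + ln 2 - EE t) / real t)
      = 2 * ln 2 * (\<Sum>k=0..n. 1 / real (2*k + 1))
               - (\<Sum>j=1..2*n+1. (1 / real j) * (\<Sum>k=1..j. (-1) ^ (k - 1) / real k))"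
  proof -
    have "(\<Sum>t=1..q. ((-1) ^ (t - 1) * ln 2 + ln 2 - EE t) / real t)
        = ln 2 * (\<Sum>t=1..q. ((-1) ^ (t - 1) + 1) / real t) - (\<Sum>t=1..q. (1 / real t) * EE t)"
    proof -
      have "(\<Sum>t=1..q. ((-1) ^ (t - 1) * ln 2 + ln 2 - EE t) / real t)
          = (\<Sum>t=1..q. ln 2 * (((-1) ^ (t - 1) + 1) / real t) - (1 / real t) * EE t)"
        by (rule sum.cong) (auto simp: field_simps)
      also have "\<dots> = ln 2 * (\<Sum>t=1..q. ((-1) ^ (t - 1) + 1) / real t) - (\<Sum>t=1..q. (1 / real t) * EE t)"
        by (simp add: sum_subtractf sum_distrib_left)
      finally show ?thesis .
    qed
    then show ?thesis unfolding q_def odd_sum EE_def by simp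
  qed
  ultimately show ?thesis
    unfolding sums_def partial q_def[symmetric] by simp
qed

end
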